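(* Let $f$ be a spectral density on $\Lambda$ and $\lambda_{1,n}(f)$ the smallest eigenvalue of $T_n(f)$. (a) If $\overline{E_f}=\Gamma_{2\alpha}(\theta_0)$ with $0<\alpha<\pi$, then $\limsup_{n\to\infty}\sqrt[n]{\lambda_{1,n}(f)}\le\sin^2(\alpha/2)$. (b) If $\overline{E_f}=\Gamma_{\alpha,\delta}(\theta_0)$ with $\alpha>0$, $\delta\ge0$, $\alpha+\delta\le\pi$, then $\limsup_{n\to\infty}\sqrt[n]{\lambda_{1,n}(f)}\le\sin(\alpha/2)\sin(\alpha/2+\delta)$.
   Context: $\Lambda=[-\pi,\pi]$. A spectral density is $f\ge0$, $f\in L^1(\Lambda)$, positive on a set of positive measure; $r(t)=\int_\Lambda e^{-it\lambda}f(\lambda)d\lambda$; $T_n(f)=(r(k-j))_{j,k=0,\dots,n}$. $E_f=\{e^{i\lambda}:f(\lambda)>0\}$ with closure $\overline{E_f}$ (the support of $f$ on the unit circle). For $\theta_0\in[-\pi,\pi)$: $\Gamma_{2\alpha}(\theta_0)=\{e^{i\theta}:|\theta-\theta_0|\le\alpha\}$; $\Gamma_{\alpha,\delta}(\theta_0)=\{e^{i\theta}:\delta\le|\theta-\theta_0|\le\delta+\alpha\}$. *)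

theory Defs
  imports "HOL-Analysis.Analysis" "Jordan_Normal_Form.Char_Poly"
begin

definition spectral_density :: "(real \<Rightarrow> real) \<Rightarrow> bool" where
  "spectral_density f \<longleftrightarrow>
     (\<forall>l\<in>{-pi..pi}. 0 \<le> f l) \<and>
     set_integrable lborel {-pi..pi} f \<and>
     emeasure lborel {l\<in>{-pi..pi}. 0 < f l} > 0"

definition covar :: "(real \<Rightarrow> real) \<Rightarrow> int \<Rightarrow> complex" where
  "covar f t = (LINT l:{-pi..pi}|lborel. cis (- real_of_int t * l) * complex_of_real (f l))"

definition toeplitz :: "nat \<Rightarrow> (real \<Rightarrow> real) \<Rightarrow> complex mat" where
  "toeplitz n f = mat (n+1) (n+1) (\<lambda>(j,k). covar f (int k - int j))"

text \<open>Smallest eigenvalue lambda_{1,n}(f) of the Hermitian matrix T_n(f)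
  (all its eigenvalues are real).\<close>
definition min_eig :: "nat \<Rightarrow> (real \<Rightarrow> real) \<Rightarrow> real" where
  "min_eig n f = Min {x::real. eigenvalue (toeplitz n f) (complex_of_real x)}"

definition E_set :: "(real \<Rightarrow> real) \<Rightarrow> complex set" where
  "E_set f = {cis l | l. l \<in> {-pi..pi} \<and> 0 < f l}"

definition Gamma_arc :: "real \<Rightarrow> real \<Rightarrow> complex set" where
  "Gamma_arc \<alpha> \<theta>0 = {cis \<theta> | \<theta>. \<bar>\<theta> - \<theta>0\<bar> \<le> \<alpha>}"

definition Gamma_two_arcs :: "real \<Rightarrow> real \<Rightarrow> real \<Rightarrow> complex set" where
  "Gamma_two_arcs \<alpha> \<delta> \<theta>0 = {cis \<theta> | \<theta>. \<delta> \<le> \<bar>\<theta> - \<theta>0\<bar> \<and> \<bar>\<theta> - \<theta>0\<bar> \<le> \<delta> + \<alpha>}"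

end

theory Submission
  imports Defs
begin

definition qf :: "(nat \<Rightarrow> nat \<Rightarrow> complex) \<Rightarrow> nat \<Rightarrow> (nat \<Rightarrow> complex) \<Rightarrow> (nat \<Rightarrow> complex) \<Rightarrow> complex" where
  "qf a N x y = (\<Sum>j<N. \<Sum>k<N. cnj (x j) * a j k * y k)"

definition nsq :: "nat \<Rightarrow> (nat \<Rightarrow> complex) \<Rightarrow> real" where
  "nsq N x = (\<Sum>i<N. (cmod (x i))\<^sup>2)"

lemma qf_add_right: "qf a N x (\<lambda>i. y i + z i) = qf a N x y + qf a N x z"
  unfolding qf_def by (simp add: distrib_left sum.distrib)

lemma qf_add_left: "qf a N (\<lambda>i. y i + z i) x = qf a N y x + qf a N z x"
  unfolding qf_def by (simp add: distrib_right sum.distrib)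

lemma qf_scale_right: "qf a N x (\<lambda>i. c * y i) = c * qf a N x y"
  unfolding qf_def by (simp add: sum_distrib_left mult_ac)

lemma qf_scale_left: "qf a N (\<lambda>i. c * y i) x = cnj c * qf a N y x"
  unfolding qf_def by (simp add: sum_distrib_left mult_ac)

lemma qf_herm:
  assumes "\<And>j k. cnj (a j k) = a k j"
  shows "qf a N y x = cnj (qf a N x y)"
proof -
  have "cnj (qf a N x y) = (\<Sum>j<N. \<Sum>k<N. x j * cnj (a j k) * cnj (y k))"
    unfolding qf_def by simp
  also have "\<dots> = (\<Sum>j<N. \<Sum>k<N. cnj (y k) * a k j * x j)"
    by (intro sum.cong refl) (simp add: assms)
  also have "\<dots> = qf a N y x"
    unfolding qf_def by (rule sum.swap)
  finally show ?thesis by simp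
qed
lemma cont_coord[continuous_intros]: "continuous_on S (\<lambda>x::nat\<Rightarrow>complex. x i)"
  by (rule continuous_on_subset[OF continuous_on_product_coordinates]) simp

lemma compact_box: "compact (Pi UNIV (\<lambda>i. if i < N then cball (0::complex) 1 else {0}))"
proof -
  have "compactin (product_topology (\<lambda>i. euclidean) UNIV)
          (PiE UNIV (\<lambda>i. if i < N then cball (0::complex) 1 else {0}))"
    by (subst compactin_PiE) auto
  then show ?thesis by (simp add: euclidean_product_topology PiE_UNIV_domain)
qed

lemma nsq_nonneg: "0 \<le> nsq N x"
  unfolding nsq_def by (intro sum_nonneg) auto

lemma nsq_zero: "nsq N x = 0 \<Longrightarrow> i < N \<Longrightarrow> x i = 0"
  unfolding nsq_def by (subst (asm) sum_nonneg_eq_0_iff) auto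

lemma qf_cong: "(\<And>i. i < N \<Longrightarrow> x i = x' i) \<Longrightarrow> (\<And>i. i < N \<Longrightarrow> y i = y' i) \<Longrightarrow>
   qf a N x y = qf a N x' y'"
  unfolding qf_def by (intro sum.cong refl) auto

lemma qf_diff_mat: "qf (\<lambda>j k. a j k - c j k) N x y = qf a N x y - qf c N x y"
  unfolding qf_def by (simp add: algebra_simps sum_subtractf)

lemma qf_id: "qf (\<lambda>j k. if j = k then c else 0) N y y = c * (\<Sum>i<N. cnj (y i) * y i)"
proof -
  have "qf (\<lambda>j k. if j = k then c else 0) N y y = (\<Sum>j<N. \<Sum>k<N. if k = j then cnj (y j) * c * y j else 0)"
    unfolding qf_def by (intro sum.cong refl) auto
  also have "\<dots> = (\<Sum>j<N. cnj (y j) * c * y j)" by simp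
  finally show ?thesis by (simp add: sum_distrib_left mult_ac)
qed

lemma Re_sum_cnj: "Re (\<Sum>i<N. cnj (y i) * y i) = nsq N y"
  unfolding nsq_def Re_sum by (intro sum.cong refl) (metis Re_complex_of_real complex_norm_square mult.commute)

lemma herm_min_eig:
  fixes a :: "nat \<Rightarrow> nat \<Rightarrow> complex"
  assumes N: "0 < N" and herm: "\<And>j k. cnj (a j k) = a k j"
  shows "\<exists>m::real. \<exists>x. (\<exists>i<N. x i \<noteq> 0) \<and> (\<forall>j<N. (\<Sum>k<N. a j k * x k) = of_real m * x j)
           \<and> (\<forall>v. m * nsq N v \<le> Re (qf a N v v))"
proof -
  define K where "K = Pi UNIV (\<lambda>i. if i<N then cball (0::complex) 1 else {0}) \<inter> {x. nsq N x = 1}"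
  have cn: "continuous_on UNIV (nsq N)"
    unfolding nsq_def by (intro continuous_intros)
  have cK: "compact K"
    unfolding K_def by (intro compact_Int_closed compact_box closed_Collect_eq cn continuous_intros)
  have "(\<lambda>i. if i = 0 then 1 else 0) \<in> K"
  proof -
    have "nsq N (\<lambda>i. if i = 0 then 1 else 0) = (\<Sum>i<N. if i = 0 then 1 else 0)"
      unfolding nsq_def by (intro sum.cong refl) auto
    also have "\<dots> = 1" using N by simp
    finally show ?thesis unfolding K_def using N by auto
  qed
  then have neK: "K \<noteq> {}" by blast
  have cg: "continuous_on K (\<lambda>x. Re (qf a N x x))"
    unfolding qf_def by (intro continuous_intros)
  obtain x0 where x0K: "x0 \<in> K" and x0min: "\<And>y. y \<in> K \<Longrightarrow> Re (qf a N x0 x0) \<le> Re (qf a N y y)"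
    using continuous_attains_inf[OF cK neK cg] by blast
  define m where "m = Re (qf a N x0 x0)"
  have bound: "m * nsq N v \<le> Re (qf a N v v)" for v
  proof (cases "nsq N v = 0")
    case True
    then have "qf a N v v = qf a N (\<lambda>_. 0) (\<lambda>_. 0)"
      by (intro qf_cong) (auto dest: nsq_zero)
    then show ?thesis using True by (simp add: qf_def)
  next
    case False
    define s where "s = sqrt (nsq N v)"
    have s0: "0 < s" using False nsq_nonneg[of N v] unfolding s_def by simp
    have ss: "s\<^sup>2 = nsq N v" unfolding s_def using nsq_nonneg[of N v] by simp
    define w where "w = (\<lambda>i. if i < N then of_real (1/s) * v i else 0)"
    have "w \<in> K"
    proof -
      have "cmod (v i) \<le> s" if "i < N" for i
      proof -
        have "(cmod (v i))\<^sup>2 \<le> nsq N v"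
          unfolding nsq_def using that by (intro member_le_sum) auto
        then show ?thesis unfolding s_def by (simp add: real_le_rsqrt)
      qed
      then have box: "w \<in> Pi UNIV (\<lambda>i. if i<N then cball (0::complex) 1 else {0})"
        using s0 by (auto simp: w_def norm_divide)
      have "nsq N w = (\<Sum>i<N. (1/s)\<^sup>2 * (cmod (v i))\<^sup>2)"
        unfolding nsq_def w_def using s0 by (intro sum.cong refl) (auto simp: norm_divide power_divide)
      also have "\<dots> = (1/s)\<^sup>2 * nsq N v" unfolding nsq_def by (simp add: sum_distrib_left)
      also have "\<dots> = 1" using ss s0 False by (simp add: field_simps)
      finally show ?thesis using box unfolding K_def by auto
    qed
    then have "m \<le> Re (qf a N w w)" unfolding m_def by (rule x0min)
    also have "qf a N w w = qf a N (\<lambda>i. of_real (1/s) * v i) (\<lambda>i. of_real (1/s) * v i)"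
      by (intro qf_cong) (auto simp: w_def)
    also have "\<dots> = of_real ((1/s)\<^sup>2) * qf a N v v"
      by (simp only: qf_scale_left qf_scale_right) (simp add: power2_eq_square)
    finally have "m \<le> (1/s)\<^sup>2 * Re (qf a N v v)" by simp
    then have "m * s\<^sup>2 \<le> Re (qf a N v v)" using s0 by (simp add: field_simps)
    then show ?thesis using ss by simp
  qed
  define b where "b = (\<lambda>j k. a j k - (if j = k then complex_of_real m else 0))"
  have hb: "cnj (b j k) = b k j" for j k unfolding b_def by (auto simp: herm)
  have qfb: "Re (qf b N y y) = Re (qf a N y y) - m * nsq N y" for y
    unfolding b_def qf_diff_mat qf_id by (simp add: Re_sum_cnj[symmetric])
  have psd: "0 \<le> Re (qf b N y y)" for y using bound[of y] qfb[of y] by simp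
  have nx0: "nsq N x0 = 1" using x0K unfolding K_def by auto
  have z0: "Re (qf b N x0 x0) = 0" using qfb[of x0] nx0 unfolding m_def by simp
  define w where "w = (\<lambda>j. \<Sum>k<N. b j k * x0 k)"
  define \<sigma> where "\<sigma> = nsq N w"
  have qwx: "qf b N w x0 = (\<Sum>j<N. cnj (w j) * w j)"
  proof -
    have "qf b N w x0 = (\<Sum>j<N. cnj (w j) * (\<Sum>k<N. b j k * x0 k))"
      unfolding qf_def by (simp add: sum_distrib_left mult.assoc)
    also have "\<dots> = (\<Sum>j<N. cnj (w j) * w j)" by (simp add: w_def)
    finally show ?thesis .
  qed
  have Rwx: "Re (qf b N w x0) = \<sigma>" unfolding qwx \<sigma>_def by (rule Re_sum_cnj)
  have Rxw: "Re (qf b N x0 w) = \<sigma>" using Rwx qf_herm[of b N x0 w, OF hb] by simp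
  define Q where "Q = Re (qf b N w w)"
  have expand: "Re (qf b N (\<lambda>i. x0 i + of_real t * w i) (\<lambda>i. x0 i + of_real t * w i)) = 2 * t * \<sigma> + t\<^sup>2 * Q" for t
    unfolding qf_add_left qf_add_right qf_scale_left qf_scale_right
    using z0 Rwx Rxw by (simp add: Q_def power2_eq_square algebra_simps)
  have "\<sigma> = 0"
  proof -
    define c where "c = \<bar>Q\<bar> + 1"
    have c0: "0 < c" unfolding c_def by simp
    define t where "t = - \<sigma> / c"
    have "0 \<le> 2 * t * \<sigma> + t\<^sup>2 * Q" using psd expand by metis
    also have "t\<^sup>2 * Q \<le> t\<^sup>2 * c" unfolding c_def by (intro mult_left_mono) auto
    also have "2 * t * \<sigma> + t\<^sup>2 * c = - \<sigma>\<^sup>2 / c" using c0 unfolding t_def by (simp add: field_simps power2_eq_square)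
    finally have "\<sigma>\<^sup>2 / c \<le> 0" by simp
    then have "\<sigma>\<^sup>2 \<le> 0" using c0 by (simp add: divide_le_0_iff)
    then show ?thesis by simp
  qed
  then have wz: "w j = 0" if "j < N" for j using nsq_zero that unfolding \<sigma>_def by blast
  have eig: "(\<Sum>k<N. a j k * x0 k) = of_real m * x0 j" if "j < N" for j
  proof -
    have "w j = (\<Sum>k<N. a j k * x0 k) - (\<Sum>k<N. (if j = k then of_real m else 0) * x0 k)"
      unfolding w_def b_def by (simp add: left_diff_distrib sum_subtractf)
    also have "(\<Sum>k<N. (if j = k then of_real m else 0) * x0 k) = (\<Sum>k<N. if k = j then of_real m * x0 j else 0)"
      by (intro sum.cong refl) auto
    also have "\<dots> = of_real m * x0 j" using that by simp
    finally show ?thesis using wz[OF that] by simp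
  qed
  have "\<exists>i<N. x0 i \<noteq> 0"
  proof (rule ccontr)
    assume "\<not> ?thesis"
    then have "nsq N x0 = 0" unfolding nsq_def by simp
    then show False using nx0 by simp
  qed
  then show ?thesis using eig bound by blast
qed


lemma cnj_covar: "cnj (covar f t) = covar f (- t)"
proof -
  have "cnj (covar f t) = (LINT l|lborel. cnj (indicator {-pi..pi} l *\<^sub>R (cis (- real_of_int t * l) * complex_of_real (f l))))"
    unfolding covar_def set_lebesgue_integral_def by (rule Bochner_Integration.integral_cnj[symmetric])
  also have "\<dots> = covar f (- t)"
    unfolding covar_def set_lebesgue_integral_def
    by (intro Bochner_Integration.integral_cong refl) (simp add: indicator_def cis_cnj)
  finally show ?thesis .
qed

lemma toeplitz_carrier: "toeplitz n f \<in> carrier_mat (Suc n) (Suc n)"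
  unfolding toeplitz_def by simp

lemma finite_eigs: "finite {x::real. eigenvalue (toeplitz n f) (complex_of_real x)}"
proof -
  have cp: "char_poly (toeplitz n f) \<noteq> 0"
    using degree_monic_char_poly[OF toeplitz_carrier[of n f]] by auto
  have "{x::real. eigenvalue (toeplitz n f) (complex_of_real x)} \<subseteq> complex_of_real -` {z. poly (char_poly (toeplitz n f)) z = 0}"
    using eigenvalue_root_char_poly[OF toeplitz_carrier[of n f]] by auto
  moreover have "finite (complex_of_real -` {z. poly (char_poly (toeplitz n f)) z = 0})"
    by (intro finite_vimageI poly_roots_finite cp) (auto simp: inj_on_def)
  ultimately show ?thesis by (rule finite_subset)
qed

lemma min_eig_le:
  "min_eig n f * nsq (Suc n) v \<le> Re (qf (\<lambda>j k. covar f (int k - int j)) (Suc n) v v)"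
proof -
  let ?a = "\<lambda>j k. covar f (int k - int j)"
  have herm: "cnj (?a j k) = ?a k j" for j k by (simp add: cnj_covar)
  obtain m x where x0: "\<exists>i<Suc n. x i \<noteq> 0" and eig: "\<forall>j<Suc n. (\<Sum>k<Suc n. ?a j k * x k) = of_real m * x j"
    and bnd: "\<forall>v. m * nsq (Suc n) v \<le> Re (qf ?a (Suc n) v v)"
    using herm_min_eig[of "Suc n" ?a, OF _ herm] by auto
  have "eigenvector (toeplitz n f) (vec (Suc n) x) (complex_of_real m)"
    unfolding eigenvector_def
  proof (intro conjI)
    show "vec (Suc n) x \<in> carrier_vec (dim_row (toeplitz n f))" by (simp add: toeplitz_def)
    show "vec (Suc n) x \<noteq> 0\<^sub>v (dim_row (toeplitz n f))"
      using x0 by (auto simp: toeplitz_def vec_eq_iff)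
    show "toeplitz n f *\<^sub>v vec (Suc n) x = complex_of_real m \<cdot>\<^sub>v vec (Suc n) x"
    proof (rule eq_vecI)
      fix i assume i: "i < dim_vec (complex_of_real m \<cdot>\<^sub>v vec (Suc n) x)"
      then have i': "i < Suc n" by simp
      have "(toeplitz n f *\<^sub>v vec (Suc n) x) $ i = (\<Sum>k<Suc n. ?a i k * x k)"
        using i' by (simp add: toeplitz_def scalar_prod_def atLeast0LessThan)
      also have "\<dots> = of_real m * x i" using eig i' by blast
      finally show "(toeplitz n f *\<^sub>v vec (Suc n) x) $ i = (complex_of_real m \<cdot>\<^sub>v vec (Suc n) x) $ i"
        using i' by simp
    qed (simp add: toeplitz_def)
  qed
  then have "eigenvalue (toeplitz n f) (complex_of_real m)" unfolding eigenvalue_def by blast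
  then have "min_eig n f \<le> m" unfolding min_eig_def by (intro Min_le finite_eigs) auto
  then have "min_eig n f * nsq (Suc n) v \<le> m * nsq (Suc n) v"
    by (intro mult_right_mono nsq_nonneg)
  also have "\<dots> \<le> Re (qf ?a (Suc n) v v)" using bnd by blast
  finally show ?thesis .
qed


lemma int_term:
  assumes "set_integrable lborel S f"
  shows "integrable lborel (\<lambda>l. indicator S l *\<^sub>R (cis (a * l) * complex_of_real (f l)))"
proof (rule Bochner_Integration.integrable_bound[of lborel "\<lambda>l. indicator S l *\<^sub>R f l"])
  show "integrable lborel (\<lambda>l. indicator S l *\<^sub>R f l)" using assms unfolding set_integrable_def .
  then have m: "(\<lambda>l. indicator S l *\<^sub>R f l) \<in> borel_measurable lborel" by (rule borel_measurable_integrable)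
  have c: "(\<lambda>l. cis (a * l)) \<in> borel_measurable lborel"
  proof -
    have "continuous_on UNIV (\<lambda>l. cis (a * l))" by (intro continuous_intros)
    then have "(\<lambda>l. cis (a * l)) \<in> borel_measurable borel" by (rule borel_measurable_continuous_onI)
    then show ?thesis by simp
  qed
  have "(\<lambda>l. cis (a * l) * complex_of_real (indicator S l *\<^sub>R f l)) \<in> borel_measurable lborel"
    using c m by measurable
  moreover have "(\<lambda>l. cis (a * l) * complex_of_real (indicator S l *\<^sub>R f l)) = (\<lambda>l. indicator S l *\<^sub>R (cis (a * l) * complex_of_real (f l)))"
    by (auto simp: indicator_def)
  ultimately show "(\<lambda>l. indicator S l *\<^sub>R (cis (a * l) * complex_of_real (f l))) \<in> borel_measurable lborel" by simp
  show "AE x in lborel. norm (indicator S x *\<^sub>R (cis (a * x) * complex_of_real (f x))) \<le> norm (indicator S x *\<^sub>R f x)"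
    by (auto simp: indicator_def norm_mult)
qed

lemma qf_covar:
  assumes si: "set_integrable lborel {-pi..pi} f"
  shows "qf (\<lambda>j k. covar f (int k - int j)) N v v =
    complex_of_real (LINT l|lborel. indicator {-pi..pi} l * f l * (cmod (\<Sum>k<N. v k * cis (- real k * l)))\<^sup>2)"
proof -
  define S :: "real set" where "S = {-pi..pi}"
  define h where "h = (\<lambda>j k l. indicator S l *\<^sub>R (cis (- real_of_int (int k - int j) * l) * complex_of_real (f l)))"
  have ih: "integrable lborel (h j k)" for j k
    unfolding h_def S_def by (rule int_term[OF si])
  have "qf (\<lambda>j k. covar f (int k - int j)) N v v = (\<Sum>j<N. \<Sum>k<N. integral\<^sup>L lborel (\<lambda>l. cnj (v j) * v k * h j k l))"
  proof -
    have cv: "covar f (int k - int j) = integral\<^sup>L lborel (h j k)" for j k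
      unfolding covar_def set_lebesgue_integral_def h_def S_def by simp
    have "integral\<^sup>L lborel (\<lambda>l. (cnj (v j) * v k) * h j k l) = (cnj (v j) * v k) * integral\<^sup>L lborel (h j k)" for j k
      by (rule integral_mult_right_zero)
    then show ?thesis unfolding qf_def cv by (simp add: mult_ac)
  qed
  also have "\<dots> = (\<Sum>j<N. integral\<^sup>L lborel (\<lambda>l. \<Sum>k<N. cnj (v j) * v k * h j k l))"
    by (intro sum.cong refl Bochner_Integration.integral_sum[symmetric]) (simp add: ih)
  also have "\<dots> = integral\<^sup>L lborel (\<lambda>l. \<Sum>j<N. \<Sum>k<N. cnj (v j) * v k * h j k l)"
    by (intro Bochner_Integration.integral_sum[symmetric] Bochner_Integration.integrable_sum) (simp add: ih)
  also have "\<dots> = integral\<^sup>L lborel (\<lambda>l. complex_of_real (indicator S l * f l * (cmod (\<Sum>k<N. v k * cis (- real k * l)))\<^sup>2))"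
  proof (intro Bochner_Integration.integral_cong refl)
    fix l
    define c where "c = (\<lambda>k::nat. cis (- real k * l))"
    have e: "cis (- real_of_int (int k - int j) * l) = cnj (c j) * c k" for j k
      unfolding c_def by (simp add: cis_cnj cis_mult algebra_simps)
    have "(\<Sum>j<N. \<Sum>k<N. cnj (v j) * v k * h j k l) =
        complex_of_real (indicator S l * f l) * (\<Sum>j<N. \<Sum>k<N. cnj (v j * c j) * (v k * c k))"
      unfolding h_def e sum_distrib_left by (intro sum.cong refl) (simp add: scaleR_conv_of_real mult_ac)
    also have "(\<Sum>j<N. \<Sum>k<N. cnj (v j * c j) * (v k * c k)) = cnj (\<Sum>j<N. v j * c j) * (\<Sum>k<N. v k * c k)"
      by (simp add: sum_product cnj_sum)
    also have "\<dots> = complex_of_real ((cmod (\<Sum>k<N. v k * c k))\<^sup>2)"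
      by (subst complex_norm_square) (rule mult.commute)
    finally show "(\<Sum>j<N. \<Sum>k<N. cnj (v j) * v k * h j k l) =
        complex_of_real (indicator S l * f l * (cmod (\<Sum>k<N. v k * cis (- real k * l)))\<^sup>2)"
      unfolding c_def by simp
  qed
  also have "\<dots> = complex_of_real (LINT l|lborel. indicator {-pi..pi} l * f l * (cmod (\<Sum>k<N. v k * cis (- real k * l)))\<^sup>2)"
    unfolding S_def by (rule integral_complex_of_real)
  finally show ?thesis .
qed



lemma min_eig_bound:
  assumes sd: "spectral_density f"
    and bnd: "\<And>l. l \<in> {-pi..pi} \<Longrightarrow> 0 < f l \<Longrightarrow> cmod (\<Sum>k<Suc n. v k * cis (- real k * l)) \<le> 1"
  shows "min_eig n f * nsq (Suc n) v \<le> (LINT l:{-pi..pi}|lborel. f l)"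
proof -
  have si: "set_integrable lborel {-pi..pi} f" and fpos: "\<And>l. l \<in> {-pi..pi} \<Longrightarrow> 0 \<le> f l"
    using sd unfolding spectral_density_def by auto
  have "min_eig n f * nsq (Suc n) v \<le> Re (qf (\<lambda>j k. covar f (int k - int j)) (Suc n) v v)"
    by (rule min_eig_le)
  also have "\<dots> = (LINT l|lborel. indicator {-pi..pi} l * f l * (cmod (\<Sum>k<Suc n. v k * cis (- real k * l)))\<^sup>2)"
    unfolding qf_covar[OF si] by simp
  also have "\<dots> \<le> (LINT l|lborel. indicator {-pi..pi} l *\<^sub>R f l)"
  proof (rule integral_mono')
    show "integrable lborel (\<lambda>l. indicator {-pi..pi} l *\<^sub>R f l)" using si unfolding set_integrable_def .
    fix l
    show "0 \<le> indicator {-pi..pi} l *\<^sub>R f l" using fpos by (auto simp: indicator_def)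
    show "indicator {-pi..pi} l * f l * (cmod (\<Sum>k<Suc n. v k * cis (- real k * l)))\<^sup>2 \<le> indicator {-pi..pi} l *\<^sub>R f l"
    proof (cases "l \<in> {-pi..pi} \<and> 0 < f l")
      case True
      then have "(cmod (\<Sum>k<Suc n. v k * cis (- real k * l)))\<^sup>2 \<le> 1"
        using bnd[of l] by (simp add: power_le_one)
      then show ?thesis using True by (simp add: indicator_def)
    next
      case False
      then have "indicator {-pi..pi} l * f l = 0" using fpos[of l] by (auto simp: indicator_def)
      then show ?thesis using fpos[of l] by (auto simp: indicator_def)
    qed
  qed
  also have "\<dots> = (LINT l:{-pi..pi}|lborel. f l)" unfolding set_lebesgue_integral_def ..
  finally show ?thesis .
qed



fun chebP :: "complex poly \<Rightarrow> nat \<Rightarrow> complex poly" where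
  "chebP S 0 = 1"
| "chebP S (Suc 0) = S"
| "chebP S (Suc (Suc m)) = Polynomial.smult 2 (S * chebP S (Suc m)) - [:0,0,1:] * chebP S m"

lemma cos_rec: "cos (real (Suc (Suc m)) * t) = 2 * cos t * cos (real (Suc m) * t) - cos (real m * t)"
proof -
  have a: "real (Suc (Suc m)) * t = real (Suc m) * t + t" by (simp add: algebra_simps)
  have b: "real m * t = real (Suc m) * t - t" by (simp add: algebra_simps)
  have "cos (real (Suc (Suc m)) * t) = cos (real (Suc m) * t) * cos t - sin (real (Suc m) * t) * sin t"
    unfolding a by (rule cos_add)
  moreover have "cos (real m * t) = cos (real (Suc m) * t) * cos t + sin (real (Suc m) * t) * sin t"
    unfolding b by (rule cos_diff)
  ultimately show ?thesis by (simp add: algebra_simps)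
qed

lemma cheb_val:
  assumes "poly S y = y * complex_of_real (cos t)"
  shows "poly (chebP S m) y = y ^ m * complex_of_real (cos (real m * t))"
proof -
  have "poly (chebP S m) y = y ^ m * complex_of_real (cos (real m * t)) \<and>
        poly (chebP S (Suc m)) y = y ^ Suc m * complex_of_real (cos (real (Suc m) * t))"
  proof (induction m)
    case 0
    then show ?case using assms by simp
  next
    case (Suc m)
    then have h0: "poly (chebP S m) y = y ^ m * complex_of_real (cos (real m * t))"
      and h1: "poly (chebP S (Suc m)) y = y ^ Suc m * complex_of_real (cos (real (Suc m) * t))" by auto
    have "poly (chebP S (Suc (Suc m))) y = 2 * (poly S y * poly (chebP S (Suc m)) y) - y\<^sup>2 * poly (chebP S m) y"
      by (simp add: power2_eq_square)
    also have "\<dots> = y ^ Suc (Suc m) * complex_of_real (2 * cos t * cos (real (Suc m) * t) - cos (real m * t))"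
      unfolding h0 h1 assms by (simp add: algebra_simps power2_eq_square)
    also have "\<dots> = y ^ Suc (Suc m) * complex_of_real (cos (real (Suc (Suc m)) * t))"
      by (simp only: cos_rec)
    finally show ?case using h1 by simp
  qed
  then show ?thesis by simp
qed

lemma cheb_deg:
  assumes dS: "degree S = 2" and lS: "lead_coeff S = s" and s0: "s \<noteq> 0"
  shows "degree (chebP S m) = 2 * m \<and> lead_coeff (chebP S m) = (if m = 0 then 1 else s * (2 * s) ^ (m - 1))"
proof -
  let ?P = "\<lambda>m. degree (chebP S m) = 2 * m \<and> lead_coeff (chebP S m) = (if m = 0 then 1 else s * (2 * s) ^ (m - 1))"
  have "?P m \<and> ?P (Suc m)"
  proof (induction m)
    case 0
    then show ?case using dS lS by simp
  next
    case (Suc m)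
    then have d0: "degree (chebP S m) = 2 * m" and d1: "degree (chebP S (Suc m)) = 2 * Suc m"
      and l1: "lead_coeff (chebP S (Suc m)) = s * (2 * s) ^ m" by auto
    have nz1: "chebP S (Suc m) \<noteq> 0" using l1 s0 by auto
    have nzS: "S \<noteq> 0" using dS by auto
    define A where "A = Polynomial.smult 2 (S * chebP S (Suc m))"
    define B where "B = [:0,0,1:] * chebP S m"
    have dA: "degree A = 2 * Suc (Suc m)" unfolding A_def using nz1 nzS dS d1 by (simp add: degree_mult_eq)
    have lA: "lead_coeff A = s * (2 * s) ^ Suc m" unfolding A_def lead_coeff_smult lead_coeff_mult lS l1 by simp
    have dB: "degree B \<le> 2 + 2 * m" unfolding B_def using degree_mult_le[of "[:0,0,1:]" "chebP S m"] d0 by simp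
    have eq: "chebP S (Suc (Suc m)) = - B + A" unfolding A_def B_def by simp
    have dlt: "degree (- B) < degree A" using dA dB by simp
    have "degree (chebP S (Suc (Suc m))) = 2 * Suc (Suc m)" unfolding eq
      using degree_add_eq_left[OF dlt] dA by (simp add: add.commute)
    moreover have "lead_coeff (chebP S (Suc (Suc m))) = s * (2 * s) ^ Suc m"
      unfolding eq using lead_coeff_add_le[OF dlt] lA by simp
    moreover have "(if Suc m = 0 then 1 else s * (2 * s) ^ (Suc m - 1)) = s * (2 * s) ^ m" by simp
    moreover have "(if Suc (Suc m) = 0 then 1 else s * (2 * s) ^ (Suc (Suc m) - 1)) = s * (2 * s) ^ Suc m" by simp
    ultimately show ?case using d1 l1 by metis
  qed
  then show ?thesis by blast
qed



lemma arc_cos_bound: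
  assumes cl: "closure (E_set f) = Gamma_two_arcs \<alpha> \<delta> \<theta>0" and d0: "0 \<le> \<delta>" and ad: "\<alpha> + \<delta> \<le> pi"
    and l: "l \<in> {-pi..pi}" "0 < f l"
  shows "cos (\<delta> + \<alpha>) \<le> cos (\<theta>0 - l) \<and> cos (\<theta>0 - l) \<le> cos \<delta>"
proof -
  have "cis l \<in> E_set f" unfolding E_set_def using l by blast
  then have "cis l \<in> Gamma_two_arcs \<alpha> \<delta> \<theta>0" using closure_subset cl by blast
  then obtain \<theta> where eq: "cis l = cis \<theta>" and b1: "\<delta> \<le> \<bar>\<theta> - \<theta>0\<bar>" and b2: "\<bar>\<theta> - \<theta>0\<bar> \<le> \<delta> + \<alpha>"
    unfolding Gamma_two_arcs_def by blast
  have cl': "cos l = cos \<theta>" using arg_cong[OF eq, of Re] by simp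
  have sl': "sin l = sin \<theta>" using arg_cong[OF eq, of Im] by simp
  have "cos (\<theta>0 - l) = cos (\<theta>0 - \<theta>)" by (simp add: cos_diff cl' sl')
  also have "\<dots> = cos \<bar>\<theta> - \<theta>0\<bar>" by (simp add: cos_abs_real[of "\<theta> - \<theta>0"] cos_minus[of "\<theta> - \<theta>0", symmetric])
  finally have e: "cos (\<theta>0 - l) = cos \<bar>\<theta> - \<theta>0\<bar>" .
  have "cos (\<delta> + \<alpha>) \<le> cos \<bar>\<theta> - \<theta>0\<bar>"
    using b1 b2 d0 ad by (intro cos_monotone_0_pi_le) auto
  moreover have "cos \<bar>\<theta> - \<theta>0\<bar> \<le> cos \<delta>"
    using b1 b2 d0 ad by (intro cos_monotone_0_pi_le) auto
  ultimately show ?thesis using e by simp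
qed



lemma cis_sq_plus_one: "cis \<phi> * cis \<phi> + 1 = cis \<phi> * complex_of_real (2 * cos \<phi>)"
proof -
  have "(sin \<phi>)\<^sup>2 = 1 - (cos \<phi>)\<^sup>2" by (simp add: sin_squared_eq)
  then show ?thesis by (simp add: complex_eq_iff power2_eq_square algebra_simps)
qed

lemma poly_sum_ext:
  fixes p :: "complex poly"
  assumes "degree p \<le> n"
  shows "poly p x = (\<Sum>i<Suc n. coeff p i * x ^ i)"
proof -
  have "poly p x = (\<Sum>i\<le>degree p. coeff p i * x ^ i)" by (rule Polynomial.poly_altdef)
  also have "\<dots> = (\<Sum>i<Suc n. coeff p i * x ^ i)"
    using assms by (intro sum.mono_neutral_left) (auto simp: coeff_eq_0)
  finally show ?thesis .
qed

lemma per_n: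
  assumes sd: "spectral_density f" and a0: "0 < \<alpha>" and d0: "0 \<le> \<delta>" and ad: "\<alpha> + \<delta> \<le> pi"
    and cl: "closure (E_set f) = Gamma_two_arcs \<alpha> \<delta> \<theta>0"
  shows "min_eig n f \<le> 4 * (LINT l:{-pi..pi}|lborel. f l) * (sin (\<alpha>/2) * sin (\<alpha>/2 + \<delta>)) ^ (2 * (n div 2))"
proof -
  define r where "r = sin (\<alpha>/2) * sin (\<alpha>/2 + \<delta>)"
  define c where "c = cos (\<alpha>/2 + \<delta>) * cos (\<alpha>/2)"
  define I where "I = (LINT l:{-pi..pi}|lborel. f l)"
  have r0: "0 < r" unfolding r_def using a0 d0 ad
    by (intro mult_pos_pos sin_gt_zero) auto
  have cd: "cos \<delta> = c + r"
  proof -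
    have "cos \<delta> = cos ((\<alpha>/2 + \<delta>) - \<alpha>/2)" by simp
    then show ?thesis unfolding cos_diff c_def r_def by (simp add: mult_ac)
  qed
  have cda: "cos (\<delta> + \<alpha>) = c - r"
  proof -
    have "cos (\<delta> + \<alpha>) = cos ((\<alpha>/2 + \<delta>) + \<alpha>/2)" by (simp add: algebra_simps)
    then show ?thesis unfolding cos_add c_def r_def by (simp add: mult_ac)
  qed
  define s where "s = complex_of_real (1 / (2 * r))"
  have s0: "s \<noteq> 0" unfolding s_def using r0 by simp
  define S where "S = Polynomial.smult s [:1, - complex_of_real (2 * c), 1:]"
  have dS: "degree S = 2" unfolding S_def using s0 by simp
  have lS: "lead_coeff S = s" unfolding S_def using s0 by simp
  define k where "k = n div 2"
  have kn: "2 * k \<le> n" unfolding k_def by simp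
  define P where "P = chebP S k"
  have dP: "degree P = 2 * k" and lP: "lead_coeff P = (if k = 0 then 1 else s * (2 * s) ^ (k - 1))"
    using cheb_deg[OF dS lS s0, of k] unfolding P_def by auto
  define v where "v = (\<lambda>j. coeff P j * cis (real j * \<theta>0))"
  have bnd: "cmod (\<Sum>j<Suc n. v j * cis (- real j * l)) \<le> 1" if l: "l \<in> {-pi..pi}" "0 < f l" for l
  proof -
    define y where "y = cis (\<theta>0 - l)"
    have "(\<Sum>j<Suc n. v j * cis (- real j * l)) = (\<Sum>j<Suc n. coeff P j * y ^ j)"
      unfolding v_def y_def by (intro sum.cong refl) (simp add: Complex.DeMoivre cis_mult algebra_simps)
    also have "\<dots> = poly P y" using dP kn by (intro poly_sum_ext[symmetric]) simp
    finally have ps: "(\<Sum>j<Suc n. v j * cis (- real j * l)) = poly P y" .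
    define x where "x = (cos (\<theta>0 - l) - c) / r"
    have xb: "-1 \<le> x \<and> x \<le> 1"
      using arc_cos_bound[OF cl d0 ad l] cd cda r0 unfolding x_def by (auto simp: field_simps)
    define t where "t = arccos x"
    have ct: "cos t = x" unfolding t_def using xb by (simp add: cos_arccos)
    have "poly S y = s * (y * y + 1 - complex_of_real (2 * c) * y)" unfolding S_def by (simp add: algebra_simps)
    also have "y * y + 1 = y * complex_of_real (2 * cos (\<theta>0 - l))" unfolding y_def by (rule cis_sq_plus_one)
    also have "s * (y * complex_of_real (2 * cos (\<theta>0 - l)) - complex_of_real (2 * c) * y) = y * complex_of_real (cos t)"
      unfolding s_def ct x_def using r0 by (simp add: field_simps)
    finally have "poly S y = y * complex_of_real (cos t)" .
    then have "poly P y = y ^ k * complex_of_real (cos (real k * t))" unfolding P_def by (rule cheb_val)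
    then have "cmod (poly P y) = \<bar>cos (real k * t)\<bar>" unfolding y_def by (simp add: norm_mult norm_power)
    then show ?thesis using ps by simp
  qed
  have mb: "min_eig n f * nsq (Suc n) v \<le> I" unfolding I_def by (rule min_eig_bound[OF sd bnd]) auto
  have lb: "1 / (4 * r ^ (2 * k)) \<le> nsq (Suc n) v"
  proof -
    have "(cmod (v (2 * k)))\<^sup>2 \<le> nsq (Suc n) v" unfolding nsq_def using kn by (intro member_le_sum) auto
    moreover have "cmod (v (2 * k)) = cmod (lead_coeff P)" unfolding v_def dP by (simp add: norm_mult)
    moreover have "1 / (4 * r ^ (2 * k)) \<le> (cmod (lead_coeff P))\<^sup>2"
    proof (cases "k = 0")
      case True then show ?thesis using lP by simp
    next
      case False
      then obtain j where kj: "k = Suc j" by (cases k) auto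
      have e2: "2 * s = complex_of_real (1/r)" unfolding s_def using r0 by simp
      have "lead_coeff P = complex_of_real (1 / (2 * r)) * complex_of_real (1/r) ^ j"
        using lP unfolding kj e2 by (simp add: s_def)
      then have "cmod (lead_coeff P) = 1 / (2 * r) * (1 / r) ^ j"
        using r0 by (simp add: norm_mult norm_power norm_divide)
      also have "\<dots> = 1 / (2 * r ^ k)" unfolding kj using r0 by (simp add: field_simps)
      finally have "cmod (lead_coeff P) = 1 / (2 * r ^ k)" .
      moreover have "r ^ (2 * k) = r ^ k * r ^ k" by (simp add: mult_2 power_add)
      ultimately show ?thesis using r0 by (simp add: power2_eq_square)
    qed
    ultimately show ?thesis by (metis order_trans)
  qed
  have I0: "0 \<le> I"
  proof -
    have "0 \<le> (LINT l|lborel. indicator {-pi..pi} l *\<^sub>R f l)"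
      using sd unfolding spectral_density_def by (intro Bochner_Integration.integral_nonneg) (auto simp: indicator_def)
    then show ?thesis unfolding I_def set_lebesgue_integral_def .
  qed
  have "min_eig n f \<le> 4 * I * r ^ (2 * k)"
  proof (cases "min_eig n f \<le> 0")
    case True
    then show ?thesis using I0 r0 by (meson order_trans mult_nonneg_nonneg zero_le_power less_imp_le zero_le_numeral)
  next
    case False
    then have "min_eig n f * (1 / (4 * r ^ (2 * k))) \<le> min_eig n f * nsq (Suc n) v"
      using lb by (intro mult_left_mono) auto
    then have "min_eig n f * (1 / (4 * r ^ (2 * k))) \<le> I" using mb by linarith
    then show ?thesis using r0 by (simp add: field_simps)
  qed
  then show ?thesis unfolding r_def I_def k_def .
qed



lemma limsup_part:
  assumes sd: "spectral_density f" and a0: "0 < \<alpha>" and d0: "0 \<le> \<delta>" and ad: "\<alpha> + \<delta> \<le> pi"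
    and cl: "closure (E_set f) = Gamma_two_arcs \<alpha> \<delta> \<theta>0"
  shows "limsup (\<lambda>n. ereal (root n (min_eig n f))) \<le> ereal (sin (\<alpha>/2) * sin (\<alpha>/2 + \<delta>))"
proof -
  define r where "r = sin (\<alpha>/2) * sin (\<alpha>/2 + \<delta>)"
  define I where "I = (LINT l:{-pi..pi}|lborel. f l)"
  have r0: "0 < r" unfolding r_def using a0 d0 ad
    by (intro mult_pos_pos sin_gt_zero) auto
  have s1: "0 < sin (\<alpha>/2)" using a0 ad d0 by (intro sin_gt_zero) auto
  have s2: "0 < sin (\<alpha>/2 + \<delta>)" using a0 ad d0 by (intro sin_gt_zero) auto
  have r1: "r \<le> 1" unfolding r_def
    using s1 s2 by (intro mult_le_one sin_le_one) auto
  have I0: "0 \<le> I"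
  proof -
    have "0 \<le> (LINT l|lborel. indicator {-pi..pi} l *\<^sub>R f l)"
      using sd unfolding spectral_density_def by (intro Bochner_Integration.integral_nonneg) (auto simp: indicator_def)
    then show ?thesis unfolding I_def set_lebesgue_integral_def .
  qed
  define C where "C = 4 * I + 1"
  have C0: "0 < C" unfolding C_def using I0 by simp
  define Y where "Y = (\<lambda>n. root n C * r / root n r)"
  have le: "root n (min_eig n f) \<le> Y n" if n: "0 < n" for n
  proof -
    have "min_eig n f \<le> 4 * I * r ^ (2 * (n div 2))"
      using per_n[OF sd a0 d0 ad cl, of n] unfolding r_def I_def by simp
    also have "r ^ (2 * (n div 2)) \<le> r ^ (n - 1)"
      using r0 r1 by (intro power_decreasing) auto
    then have "4 * I * r ^ (2 * (n div 2)) \<le> 4 * I * r ^ (n - 1)"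
      using I0 by (intro mult_left_mono) auto
    also have "\<dots> \<le> C * r ^ (n - 1)" unfolding C_def using r0 by (intro mult_right_mono) auto
    finally have "root n (min_eig n f) \<le> root n (C * r ^ (n - 1))" using n by simp
    also have "root n (C * r ^ (n - 1)) = root n C * root n r ^ (n - 1)"
      using n by (simp add: real_root_mult real_root_power)
    also have "root n r ^ (n - 1) = r / root n r"
    proof -
      have "root n r ^ (n - 1) * root n r = root n r ^ n" using n
        by (metis Suc_diff_1 power_Suc2)
      also have "\<dots> = r" using n r0 by simp
      finally show ?thesis using n r0 by (simp add: field_simps)
    qed
    finally show ?thesis unfolding Y_def by simp
  qed
  have "Y \<longlonglongrightarrow> 1 * r / 1" unfolding Y_def
    by (intro tendsto_intros LIMSEQ_root_const C0 r0) simp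
  then have Yl: "(\<lambda>n. ereal (Y n)) \<longlonglongrightarrow> ereal r" by (simp add: tendsto_ereal)
  have "limsup (\<lambda>n. ereal (root n (min_eig n f))) \<le> limsup (\<lambda>n. ereal (Y n))"
  proof (rule Limsup_mono)
    show "\<forall>\<^sub>F n in sequentially. ereal (root n (min_eig n f)) \<le> ereal (Y n)"
      using eventually_gt_at_top[of 0] by eventually_elim (simp add: le)
  qed
  also have "\<dots> = ereal r" using Yl by (intro lim_imp_Limsup) simp_all
  finally show ?thesis unfolding r_def .
qed

theorem mainTheorem18:
  fixes f :: "real \<Rightarrow> real" and \<theta>0 :: real
  assumes sd: "spectral_density f"
    and th: "-pi \<le> \<theta>0" "\<theta>0 < pi"
  shows "(\<forall>\<alpha>. 0 < \<alpha> \<and> \<alpha> < pi \<and> closure (E_set f) = Gamma_arc \<alpha> \<theta>0 \<longrightarrow>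
            limsup (\<lambda>n. ereal (root n (min_eig n f))) \<le> ereal ((sin (\<alpha>/2))\<^sup>2))
       \<and> (\<forall>\<alpha> \<delta>. 0 < \<alpha> \<and> 0 \<le> \<delta> \<and> \<alpha> + \<delta> \<le> pi \<and> closure (E_set f) = Gamma_two_arcs \<alpha> \<delta> \<theta>0 \<longrightarrow>
            limsup (\<lambda>n. ereal (root n (min_eig n f))) \<le> ereal (sin (\<alpha>/2) * sin (\<alpha>/2 + \<delta>)))"
proof (intro conjI allI impI)
  fix \<alpha> assume h: "0 < \<alpha> \<and> \<alpha> < pi \<and> closure (E_set f) = Gamma_arc \<alpha> \<theta>0"
  have "Gamma_arc \<alpha> \<theta>0 = Gamma_two_arcs \<alpha> 0 \<theta>0"
    unfolding Gamma_arc_def Gamma_two_arcs_def by auto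
  then have "limsup (\<lambda>n. ereal (root n (min_eig n f))) \<le> ereal (sin (\<alpha>/2) * sin (\<alpha>/2 + 0))"
    using h by (intro limsup_part[OF sd]) auto
  then show "limsup (\<lambda>n. ereal (root n (min_eig n f))) \<le> ereal ((sin (\<alpha>/2))\<^sup>2)"
    by (simp add: power2_eq_square)
next
  fix \<alpha> \<delta> assume h: "0 < \<alpha> \<and> 0 \<le> \<delta> \<and> \<alpha> + \<delta> \<le> pi \<and> closure (E_set f) = Gamma_two_arcs \<alpha> \<delta> \<theta>0"
  then show "limsup (\<lambda>n. ereal (root n (min_eig n f))) \<le> ereal (sin (\<alpha>/2) * sin (\<alpha>/2 + \<delta>))"
    by (intro limsup_part[OF sd]) auto
qed

end
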